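(* Let $U$ be a finite ground set, $\mathcal{M}=\langle U,\mathcal{F}\rangle$ a matroid on $U$ of rank at least $2$, $\lambda\ge 0$, $d$ an $\alpha$-relaxed semi-metric distance on $U$ (for some $\alpha\ge 1$), and $f:2^U\to\mathbb{R}_{\ge 0}$ a non-negative monotone submodular set function. Let $\phi(S)=f(S)+\lambda\, d(S)$. Let $\{x,y\}$ be a pair of distinct elements with $\{x,y\}\in\mathcal{F}$ maximizing $f(\{x,y\})+\lambda d(x,y)$ among all such pairs. Consider the local search algorithm that starts from a basis $S$ of $\mathcal{M}$ containing both $x$ and $y$ and, while there exist $u\in U\setminus S$ and $v\in S$ with $S-v+u\in\mathcal{F}$ and $\phi(S-v+u)>\phi(S)$, replaces $S$ by $S-v+u$; it returns the final $S$. Then the returned set $S$ satisfies $$\phi(S)\;\ge\;\frac{1}{2\alpha^2}\,\phi(O),$$ where $O$ is an optimal solution, i.e. $\phi(O)=\max\{\phi(T): T\in\mathcal{F}\}$.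
   Context: An $\alpha$-relaxed semi-metric distance on $U$ (with $\alpha\ge 1$) is a function $d:U\times U\to\mathbb{R}_{\ge 0}$ with $d(u,v)=d(v,u)$, $d(u,u)=0$, satisfying $d(u,v)\le \alpha\,(d(v,w)+d(w,u))$ for all $u,v,w\in U$. For $S\subseteq U$, $d(S)=\sum_{\{u,v\}\subseteq S,\,u\ne v} d(u,v)$. $f$ is monotone if $f(S)\le f(T)$ for $S\subseteq T$, and submodular if $f(S\cup\{u\})-f(S)\ge f(T\cup\{u\})-f(T)$ for $S\subseteq T$, $u\notin T$. $\mathcal{F}$ is the family of independent sets of the matroid; a basis is a maximal independent set. $S-v+u$ denotes $(S\setminus\{v\})\cup\{u\}$. *)

theory Defs
  imports Complex_Main
begin

definition matroid :: "'a set \<Rightarrow> 'a set set \<Rightarrow> bool" where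
  "matroid U F \<longleftrightarrow> finite U \<and> F \<subseteq> Pow U \<and> {} \<in> F
     \<and> (\<forall>A B. B \<in> F \<and> A \<subseteq> B \<longrightarrow> A \<in> F)
     \<and> (\<forall>A B. A \<in> F \<and> B \<in> F \<and> card A < card B \<longrightarrow> (\<exists>e \<in> B - A. insert e A \<in> F))"

definition basis :: "'a set \<Rightarrow> 'a set set \<Rightarrow> 'a set \<Rightarrow> bool" where
  "basis U F B \<longleftrightarrow> B \<in> F \<and> (\<forall>e \<in> U - B. insert e B \<notin> F)"

definition matroid_rank_ge2 :: "'a set set \<Rightarrow> bool" where
  "matroid_rank_ge2 F \<longleftrightarrow> (\<exists>A \<in> F. card A \<ge> 2)"

definition relaxed_semimetric :: "real \<Rightarrow> 'a set \<Rightarrow> ('a \<Rightarrow> 'a \<Rightarrow> real) \<Rightarrow> bool" where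
  "relaxed_semimetric \<alpha> U d \<longleftrightarrow> \<alpha> \<ge> 1
     \<and> (\<forall>u \<in> U. \<forall>v \<in> U. d u v \<ge> 0 \<and> d u v = d v u)
     \<and> (\<forall>u \<in> U. d u u = 0)
     \<and> (\<forall>u \<in> U. \<forall>v \<in> U. \<forall>w \<in> U. d u v \<le> \<alpha> * (d v w + d w u))"

definition monotone_set_fun :: "'a set \<Rightarrow> ('a set \<Rightarrow> real) \<Rightarrow> bool" where
  "monotone_set_fun U f \<longleftrightarrow> (\<forall>S T. S \<subseteq> T \<and> T \<subseteq> U \<longrightarrow> f S \<le> f T)"

definition submodular :: "'a set \<Rightarrow> ('a set \<Rightarrow> real) \<Rightarrow> bool" where
  "submodular U f \<longleftrightarrow> (\<forall>S T u. S \<subseteq> T \<and> T \<subseteq> U \<and> u \<in> U \<and> u \<notin> T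
      \<longrightarrow> f (insert u S) - f S \<ge> f (insert u T) - f T)"

text \<open>Sum of distances over unordered pairs of distinct elements of S
  (each unordered pair counted once; d is symmetric).\<close>
definition dsum :: "('a \<Rightarrow> 'a \<Rightarrow> real) \<Rightarrow> 'a set \<Rightarrow> real" where
  "dsum d S = (\<Sum>u \<in> S. \<Sum>v \<in> S. if u \<noteq> v then d u v else 0) / 2"

definition phi :: "('a set \<Rightarrow> real) \<Rightarrow> real \<Rightarrow> ('a \<Rightarrow> 'a \<Rightarrow> real) \<Rightarrow> 'a set \<Rightarrow> real" where
  "phi f lam d S = f S + lam * dsum d S"

definition improving_swap ::
  "'a set \<Rightarrow> 'a set set \<Rightarrow> ('a set \<Rightarrow> real) \<Rightarrow> 'a set \<Rightarrow> 'a set \<Rightarrow> bool" where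
  "improving_swap U F \<phi> S S' \<longleftrightarrow>
     (\<exists>u \<in> U - S. \<exists>v \<in> S. S' = insert u (S - {v}) \<and> S' \<in> F \<and> \<phi> S' > \<phi> S)"

end

theory Submission
  imports Defs
begin


lemma hall:
  fixes N :: "'i \<Rightarrow> 'b set"
  assumes "finite I" "\<forall>i\<in>I. finite (N i)" "\<forall>X\<subseteq>I. card X \<le> card (\<Union>(N ` X))"
  shows "\<exists>g. inj_on g I \<and> (\<forall>i\<in>I. g i \<in> N i)"
  using assms
proof (induction "card I" arbitrary: I N rule: less_induct)
  case less
  show ?case
  proof (cases "I = {}")
    case True then show ?thesis by auto
  next
    case False
    show ?thesis
    proof (cases "\<exists>X. X \<subseteq> I \<and> X \<noteq> {} \<and> X \<noteq> I \<and> card (\<Union>(N ` X)) \<le> card X")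
      case True
      then obtain X where X: "X \<subseteq> I" "X \<noteq> {}" "X \<noteq> I" "card (\<Union>(N ` X)) \<le> card X" by blast
      have fX: "finite X" using X less.prems finite_subset by blast
      have cX: "card X < card I" using X less.prems psubset_card_mono by blast
      have h1: "\<forall>i\<in>X. finite (N i)" using less.prems X by auto
      have h2: "\<forall>Y\<subseteq>X. card Y \<le> card (\<Union>(N ` Y))" using less.prems X by auto
      obtain g1 where g1: "inj_on g1 X" "\<forall>i\<in>X. g1 i \<in> N i"
        using less.hyps[OF cX fX h1 h2] by blast
      define M where "M = \<Union>(N ` X)"
      define N2 where "N2 i = N i - M" for i
      have "card X > 0" using X fX by auto
      hence cXI: "card (I - X) < card I" using X fX less.prems card_Diff_subset[OF fX X(1)] card_mono[OF _ X(1)]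
        by simp
      have hall2: "\<forall>Y\<subseteq>I-X. card Y \<le> card (\<Union>(N2 ` Y))"
      proof (intro allI impI)
        fix Y assume Y: "Y \<subseteq> I - X"
        have YX: "Y \<union> X \<subseteq> I" using Y X by auto
        have fYX: "finite (Y \<union> X)" using YX less.prems(1) finite_subset by blast
        have fin: "finite (\<Union>(N ` (Y \<union> X)))" using fYX YX less.prems(2) by blast
        have eq: "\<Union>(N2 ` Y) = \<Union>(N ` (Y \<union> X)) - M" unfolding N2_def M_def by auto
        have sub: "M \<subseteq> \<Union>(N ` (Y \<union> X))" unfolding M_def by auto
        have c1: "card (\<Union>(N2 ` Y)) = card (\<Union>(N ` (Y \<union> X))) - card M"
          using eq card_Diff_subset[OF finite_subset[OF sub fin] sub] by simp
        have c2: "card (Y \<union> X) \<le> card (\<Union>(N ` (Y \<union> X)))" using less.prems(3) YX by blast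
        have fY: "finite Y" using Y less.prems finite_subset by blast
        have c3: "card (Y \<union> X) = card Y + card X" using Y fY fX by (subst card_Un_disjoint) auto
        have c4: "card M \<le> card (\<Union>(N ` (Y \<union> X)))" using card_mono[OF fin sub] .
        show "card Y \<le> card (\<Union>(N2 ` Y))" using c1 c2 c3 c4 X(4) unfolding M_def by linarith
      qed
      obtain g2 where g2: "inj_on g2 (I - X)" "\<forall>i\<in>I-X. g2 i \<in> N2 i"
        using less.hyps[OF cXI _ _ hall2] less.prems unfolding N2_def by auto
      define g where "g i = (if i \<in> X then g1 i else g2 i)" for i
      show ?thesis
      proof (intro exI conjI)
        show "\<forall>i\<in>I. g i \<in> N i" using g1 g2 unfolding g_def N2_def by auto
        show "inj_on g I"
        proof (rule inj_onI)
          fix i j assume ij: "i \<in> I" "j \<in> I" "g i = g j"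
          show "i = j"
          proof (cases "i \<in> X"; cases "j \<in> X")
            assume "i \<in> X" "j \<in> X" thus ?thesis using ij g1 unfolding g_def inj_on_def by auto
          next
            assume "i \<in> X" "j \<notin> X" thus ?thesis using ij g1 g2 unfolding g_def N2_def M_def by auto
          next
            assume a1: "i \<notin> X" "j \<in> X"
            have "g1 j \<in> \<Union>(N ` X)" using a1 g1 by blast
            moreover have "g2 i \<notin> \<Union>(N ` X)" using a1 ij g2 unfolding N2_def M_def by blast
            ultimately show ?thesis using ij a1 unfolding g_def by auto
          next
            assume "i \<notin> X" "j \<notin> X" thus ?thesis using ij g2 unfolding g_def inj_on_def by auto
          qed
        qed
      qed
    next
      case False
      hence strict: "\<And>Y. Y \<subseteq> I \<Longrightarrow> Y \<noteq> {} \<Longrightarrow> Y \<noteq> I \<Longrightarrow> card Y < card (\<Union>(N ` Y))"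
        by (meson not_le)
      obtain i0 where i0: "i0 \<in> I" using \<open>I \<noteq> {}\<close> by blast
      have "card {i0} \<le> card (\<Union>(N ` {i0}))" using less.prems i0 by (meson empty_subsetI insert_subset)
      hence "N i0 \<noteq> {}" by auto
      then obtain a where a: "a \<in> N i0" by blast
      define N' where "N' i = N i - {a}" for i
      have c': "card (I - {i0}) < card I" using i0 less.prems(1) card_gt_0_iff by (metis card_Diff1_less)
      have hall': "\<forall>Y \<subseteq> I - {i0}. card Y \<le> card (\<Union>(N' ` Y))"
      proof (intro allI impI)
        fix Y assume Y: "Y \<subseteq> I - {i0}"
        show "card Y \<le> card (\<Union>(N' ` Y))"
        proof (cases "Y = {}")
          case True thus ?thesis by simp
        next
          case False
          have "Y \<noteq> I" using Y i0 by auto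
          hence lt: "card Y < card (\<Union>(N ` Y))" using strict Y False by auto
          have fY: "finite Y" using Y less.prems(1) finite_subset by blast
          have fin: "finite (\<Union>(N ` Y))" using fY Y less.prems(2) by blast
          have eq: "\<Union>(N' ` Y) = \<Union>(N ` Y) - {a}" unfolding N'_def by auto
          have "card (\<Union>(N ` Y)) - 1 \<le> card (\<Union>(N ` Y) - {a})"
            using fin by (cases "a \<in> \<Union>(N ` Y)") (auto simp: card_Diff_singleton)
          then show ?thesis using lt unfolding eq by linarith
        qed
      qed
      obtain g' where g': "inj_on g' (I - {i0})" "\<forall>i\<in>I-{i0}. g' i \<in> N' i"
        using less.hyps[OF c' _ _ hall'] less.prems unfolding N'_def by auto
      define g where "g = g'(i0 := a)"
      show ?thesis
      proof (intro exI conjI)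
        show "\<forall>i\<in>I. g i \<in> N i" using g' a unfolding g_def N'_def by auto
        show "inj_on g I"
        proof (rule inj_onI)
          fix i j assume ij: "i \<in> I" "j \<in> I" "g i = g j"
          show "i = j" using ij g' unfolding g_def N'_def inj_on_def
            by (cases "i = i0"; cases "j = i0") force+
        qed
      qed
    qed
  qed
qed



lemma mat_fin: "matroid U F \<Longrightarrow> I \<in> F \<Longrightarrow> finite I \<and> I \<subseteq> U"
  unfolding matroid_def by (meson PowD finite_subset subsetD)

lemma mat_down: "matroid U F \<Longrightarrow> B \<in> F \<Longrightarrow> A \<subseteq> B \<Longrightarrow> A \<in> F"
  unfolding matroid_def by blast

lemma mat_aug: "matroid U F \<Longrightarrow> A \<in> F \<Longrightarrow> B \<in> F \<Longrightarrow> card A < card B \<Longrightarrow> \<exists>e\<in>B-A. insert e A \<in> F"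
  unfolding matroid_def by blast

lemma mat_ext:
  assumes "matroid U F" "I \<in> F" "J \<in> F" "card I \<le> card J"
  shows "\<exists>Z\<in>F. I \<subseteq> Z \<and> Z \<subseteq> I \<union> J \<and> card Z = card J"
  using assms
proof (induction "card J - card I" arbitrary: I)
  case 0
  then show ?case by auto
next
  case (Suc n)
  hence lt: "card I < card J" by simp
  obtain e where e: "e \<in> J - I" "insert e I \<in> F" using mat_aug[OF Suc.prems(1,2,3) lt] by blast
  have fI: "finite I" using mat_fin Suc.prems by blast
  have ci: "card (insert e I) = Suc (card I)" using e fI by simp
  have "n = card J - card (insert e I)" using Suc.hyps(2) ci by simp
  moreover have "card (insert e I) \<le> card J" using ci lt by simp
  ultimately obtain Z where "Z \<in> F" "insert e I \<subseteq> Z" "Z \<subseteq> insert e I \<union> J" "card Z = card J"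
    using Suc.hyps(1)[OF _ Suc.prems(1) e(2) Suc.prems(3)] by blast
  thus ?case using e by blast
qed

lemma rank_bound:
  assumes "matroid U F" "basis U F S0" "I \<in> F"
  shows "card I \<le> card S0"
proof (rule ccontr)
  assume "\<not> ?thesis"
  hence "card S0 < card I" by simp
  moreover have "S0 \<in> F" using assms(2) unfolding basis_def by blast
  ultimately obtain e where "e \<in> I - S0" "insert e S0 \<in> F" using mat_aug assms by blast
  moreover have "e \<in> U" using \<open>e \<in> I - S0\<close> mat_fin[OF assms(1,3)] by blast
  ultimately show False using assms(2) unfolding basis_def by blast
qed

lemma swap_inv:
  assumes "matroid U F" "(improving_swap U F \<phi>)\<^sup>*\<^sup>* S0 S" "S0 \<in> F"
  shows "S \<in> F \<and> card S = card S0 \<and> \<phi> S0 \<le> \<phi> S"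
  using assms(2)
proof (induction rule: rtranclp_induct)
  case base
  then show ?case using assms by simp
next
  case (step S S')
  then obtain u v where uv: "u \<in> U - S" "v \<in> S" "S' = insert u (S - {v})" "S' \<in> F" "\<phi> S' > \<phi> S"
    unfolding improving_swap_def by blast
  have fS: "finite S" using mat_fin[OF assms(1)] step by blast
  have "card S' = card S" using uv fS by (simp add: card_Diff1_less) (metis card_Diff1_less card_gt_0_iff Suc_pred empty_iff)
  then show ?case using step uv by simp
qed



lemma exchange_bij:
  assumes M: "matroid U F" and SF: "S \<in> F" and TF: "T \<in> F" and cO: "card T = card S"
    and rk: "\<forall>I\<in>F. card I \<le> card S"
  shows "\<exists>\<pi>. bij_betw \<pi> (T - S) (S - T) \<and> (\<forall>b\<in>T-S. insert b (S - {\<pi> b}) \<in> F)"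
proof -
  define A where "A = S - T"
  define B where "B = T - S"
  define C where "C = S \<inter> T"
  define N where "N b = {a\<in>A. insert b (S - {a}) \<in> F}" for b
  have fS: "finite S" "S \<subseteq> U" using mat_fin[OF M SF] by auto
  have fT: "finite T" "T \<subseteq> U" using mat_fin[OF M TF] by auto
  have fA: "finite A" and fB: "finite B" and fC: "finite C" using fS fT unfolding A_def B_def C_def by auto
  have cA: "card A = card S - card C" unfolding A_def C_def using fS by (simp add: card_Diff_subset_Int)
  have cB: "card B = card T - card C" unfolding B_def C_def using fT by (simp add: card_Diff_subset_Int Int_commute)
  have cAB: "card A = card B" using cA cB cO by simp
  have hallc: "\<forall>X\<subseteq>B. card X \<le> card (\<Union>(N ` X))"
  proof (intro allI impI)
    fix X assume XB: "X \<subseteq> B"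
    define Y where "Y = C \<union> \<Union>(N ` X)"
    have YS: "Y \<subseteq> S" unfolding Y_def C_def N_def A_def by auto
    have fY: "finite Y" using YS fS finite_subset by blast
    have noins: "insert b Y \<notin> F" if bX: "b \<in> X" for b
    proof
      assume ins: "insert b Y \<in> F"
      have bS: "b \<notin> S" using bX XB unfolding B_def by auto
      hence bY: "b \<notin> Y" using YS by auto
      have "card (insert b Y) \<le> card S" using rk ins by blast
      then obtain Z where Z: "Z \<in> F" "insert b Y \<subseteq> Z" "Z \<subseteq> insert b Y \<union> S" "card Z = card S"
        using mat_ext[OF M ins SF] by blast
      have ZbS: "Z \<subseteq> insert b S" using Z YS by auto
      have "card (insert b S) = Suc (card S)" using bS fS by simp
      hence "\<not> insert b S \<subseteq> Z" using Z(4) card_mono[OF _ ] mat_fin[OF M Z(1)]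
        by (metis Suc_n_not_le_n)
      then obtain a where a: "a \<in> insert b S" "a \<notin> Z" by blast
      have aS: "a \<in> S" using a Z(2) by auto
      have Zeq: "Z = insert b (S - {a})"
      proof (rule card_subset_eq)
        show "finite (insert b (S - {a}))" using fS by simp
        show "Z \<subseteq> insert b (S - {a})" using ZbS a by auto
        show "card Z = card (insert b (S - {a}))" using Z(4) bS aS fS
          by (simp add: card_Diff1_less) (metis Suc_pred card_gt_0_iff empty_iff)
      qed
      have aY: "a \<notin> Y" using a Z(2) by auto
      hence "a \<notin> C" unfolding Y_def by auto
      hence "a \<in> A" using aS unfolding A_def C_def by auto
      hence "a \<in> N b" unfolding N_def using Zeq Z(1) by auto
      hence "a \<in> Y" using bX unfolding Y_def by auto
      thus False using aY by simp
    qed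
    have "C \<union> X \<subseteq> T" using XB unfolding B_def C_def by auto
    hence CX: "C \<union> X \<in> F" using mat_down[OF M TF] by blast
    have le: "card (C \<union> X) \<le> card Y"
    proof (rule ccontr)
      assume "\<not> ?thesis"
      hence "card Y < card (C \<union> X)" by simp
      moreover have "Y \<in> F" using mat_down[OF M SF YS] .
      ultimately obtain e where e: "e \<in> (C \<union> X) - Y" "insert e Y \<in> F" using mat_aug[OF M _ CX] by blast
      hence "e \<in> X" unfolding Y_def by auto
      thus False using noins e by blast
    qed
    have fX: "finite X" using XB fB finite_subset by blast
    have "card (C \<union> X) = card C + card X" using XB fC fX unfolding B_def C_def by (subst card_Un_disjoint) auto
    moreover have "card Y \<le> card C + card (\<Union>(N ` X))" unfolding Y_def by (rule card_Un_le)
    ultimately show "card X \<le> card (\<Union>(N ` X))" using le by linarith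
  qed
  have finN: "\<forall>b\<in>B. finite (N b)" using fA unfolding N_def by auto
  obtain g where g: "inj_on g B" "\<forall>b\<in>B. g b \<in> N b" using hall[OF fB finN hallc] by blast
  have gA: "g ` B \<subseteq> A" using g unfolding N_def by auto
  have "card (g ` B) = card A" using card_image[OF g(1)] cAB by simp
  hence "g ` B = A" using card_subset_eq[OF fA gA] by simp
  hence "bij_betw g B A" using g(1) unfolding bij_betw_def by simp
  moreover have "\<forall>b\<in>B. insert b (S - {g b}) \<in> F" using g unfolding N_def by auto
  ultimately show ?thesis unfolding A_def B_def by blast
qed



lemma sub_gain:
  assumes sm: "submodular U f" and SU: "S \<subseteq> U" and fin: "finite Bs" and BU: "Bs \<subseteq> U" and dj: "Bs \<inter> S = {}"
  shows "f (S \<union> Bs) - f S \<le> (\<Sum>b\<in>Bs. f (insert b S) - f S)"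
  using fin BU dj
proof (induction Bs rule: finite_induct)
  case empty
  then show ?case by simp
next
  case (insert x Fs)
  have "f (insert x (S \<union> Fs)) - f (S \<union> Fs) \<le> f (insert x S) - f S"
  proof -
    have "S \<subseteq> S \<union> Fs" "S \<union> Fs \<subseteq> U" "x \<in> U" "x \<notin> S \<union> Fs" using insert SU by auto
    thus ?thesis using sm unfolding submodular_def by blast
  qed
  moreover have "S \<union> insert x Fs = insert x (S \<union> Fs)" by auto
  ultimately show ?case using insert by simp
qed

lemma sub_loss:
  assumes sm: "submodular U f" and SU: "S \<subseteq> U" and fin: "finite As" and AS: "As \<subseteq> S"
  shows "(\<Sum>a\<in>As. f S - f (S - {a})) \<le> f S - f (S - As)"
  using fin AS
proof (induction As rule: finite_induct)
  case empty
  then show ?case by simp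
next
  case (insert a As)
  have aS: "a \<in> S" using insert by auto
  have "f (insert a (S - As - {a})) - f (S - As - {a}) \<ge> f (insert a (S - {a})) - f (S - {a})"
  proof -
    have "S - As - {a} \<subseteq> S - {a}" "S - {a} \<subseteq> U" "a \<in> U" "a \<notin> S - {a}" using SU aS by auto
    thus ?thesis using sm unfolding submodular_def by blast
  qed
  moreover have "insert a (S - As - {a}) = S - As" using aS insert by auto
  moreover have "insert a (S - {a}) = S" using aS by auto
  moreover have "S - insert a As = S - As - {a}" by auto
  ultimately show ?case using insert by simp
qed

definition Dd :: "('a \<Rightarrow> 'a \<Rightarrow> real) \<Rightarrow> 'a set \<Rightarrow> 'a set \<Rightarrow> real" where
  "Dd d X Y = (\<Sum>x\<in>X. \<Sum>y\<in>Y. d x y)"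

lemma dsum_eq:
  assumes "T \<subseteq> U" "\<forall>u\<in>U. d u u = 0"
  shows "dsum d T = Dd d T T / 2"
proof -
  have "(\<Sum>u\<in>T. \<Sum>v\<in>T. if u \<noteq> v then d u v else 0) = (\<Sum>u\<in>T. \<Sum>v\<in>T. d u v)"
    using assms by (intro sum.cong refl) auto
  thus ?thesis unfolding dsum_def Dd_def by simp
qed

lemma Dd_un_r: "finite Y1 \<Longrightarrow> finite Y2 \<Longrightarrow> Y1 \<inter> Y2 = {} \<Longrightarrow> Dd d X (Y1 \<union> Y2) = Dd d X Y1 + Dd d X Y2"
  unfolding Dd_def by (simp add: sum.union_disjoint sum.distrib)

lemma Dd_un_l: "finite X1 \<Longrightarrow> finite X2 \<Longrightarrow> X1 \<inter> X2 = {} \<Longrightarrow> Dd d (X1 \<union> X2) Y = Dd d X1 Y + Dd d X2 Y"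
  unfolding Dd_def by (simp add: sum.union_disjoint)

lemma Dd_sym: "X \<subseteq> U \<Longrightarrow> Y \<subseteq> U \<Longrightarrow> \<forall>u\<in>U. \<forall>v\<in>U. d u v = d v u \<Longrightarrow> Dd d X Y = Dd d Y X"
  unfolding Dd_def by (subst sum.swap) (intro sum.cong refl; blast)

lemma Dd_nonneg: "X \<subseteq> U \<Longrightarrow> Y \<subseteq> U \<Longrightarrow> \<forall>u\<in>U. \<forall>v\<in>U. d u v \<ge> 0 \<Longrightarrow> Dd d X Y \<ge> 0"
  unfolding Dd_def by (intro sum_nonneg) blast

lemma Dd_mono: "X \<subseteq> X' \<Longrightarrow> X' \<subseteq> U \<Longrightarrow> finite X' \<Longrightarrow> \<forall>u\<in>U. \<forall>v\<in>U. d u v \<ge> 0 \<Longrightarrow> Dd d X X \<le> Dd d X' X'"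
proof -
  assume a: "X \<subseteq> X'" "X' \<subseteq> U" "finite X'" "\<forall>u\<in>U. \<forall>v\<in>U. d u v \<ge> 0"
  have "(\<Sum>x\<in>X. \<Sum>y\<in>X. d x y) \<le> (\<Sum>x\<in>X. \<Sum>y\<in>X'. d x y)"
    using a by (intro sum_mono sum_mono2) (auto intro: finite_subset, blast)
  also have "\<dots> \<le> (\<Sum>x\<in>X'. \<Sum>y\<in>X'. d x y)"
    using a by (intro sum_mono2 sum_nonneg) (auto, blast)
  finally show ?thesis unfolding Dd_def .
qed

lemma Dd_insert:
  assumes "finite R" "x \<notin> R" "\<forall>r\<in>R. d r x = d x r"
  shows "Dd d (insert x R) (insert x R) = Dd d R R + 2*(\<Sum>r\<in>R. d x r) + d x x"
proof -
  have "Dd d (insert x R) (insert x R) = (d x x + (\<Sum>r\<in>R. d x r)) + (\<Sum>r\<in>R. d r x + (\<Sum>y\<in>R. d r y))"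
    unfolding Dd_def using assms by (simp add: sum.insert)
  also have "\<dots> = d x x + (\<Sum>r\<in>R. d x r) + (\<Sum>r\<in>R. d x r) + Dd d R R"
    unfolding Dd_def using assms by (simp add: sum.distrib)
  finally show ?thesis by simp
qed

lemma Dd_swap:
  assumes fS: "finite S" and SU: "S \<subseteq> U" and aS: "a \<in> S" and bU: "b \<in> U" and bS: "b \<notin> S"
    and sym: "\<forall>u\<in>U. \<forall>v\<in>U. d u v = d v u" and z: "\<forall>u\<in>U. d u u = 0"
  shows "Dd d (insert b (S - {a})) (insert b (S - {a})) = Dd d S S + 2*(\<Sum>s\<in>S. d b s) - 2*d b a - 2*(\<Sum>s\<in>S. d a s)"
proof -
  let ?R = "S - {a}"
  have aU: "a \<in> U" using aS SU by auto
  have 1: "Dd d (insert b ?R) (insert b ?R) = Dd d ?R ?R + 2*(\<Sum>r\<in>?R. d b r) + d b b"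
    using fS bS sym SU bU by (intro Dd_insert) auto
  have "S = insert a ?R" using aS by auto
  hence 2: "Dd d S S = Dd d ?R ?R + 2*(\<Sum>r\<in>?R. d a r) + d a a"
  proof -
    have "Dd d (insert a ?R) (insert a ?R) = Dd d ?R ?R + 2*(\<Sum>r\<in>?R. d a r) + d a a"
      using fS sym SU aU by (intro Dd_insert) auto
    thus ?thesis using \<open>S = insert a ?R\<close> by simp
  qed
  have 3: "(\<Sum>r\<in>?R. d b r) = (\<Sum>s\<in>S. d b s) - d b a" using fS aS by (simp add: sum_diff1)
  have 4: "(\<Sum>r\<in>?R. d a r) = (\<Sum>s\<in>S. d a s) - d a a" using fS aS by (simp add: sum_diff1)
  show ?thesis using 1 2 3 4 z bU aU by simp
qed



lemma kb3:
  fixes d :: "'a \<Rightarrow> 'a \<Rightarrow> real" and \<pi> :: "'a \<Rightarrow> 'a"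
  assumes bij: "bij_betw \<pi> B A" and fB: "finite B" and BU: "B \<subseteq> U" and AU: "A \<subseteq> U"
    and sym: "\<forall>u\<in>U. \<forall>v\<in>U. d u v = d v u" and z: "\<forall>u\<in>U. d u u = 0"
    and tri: "\<forall>u\<in>U. \<forall>v\<in>U. \<forall>w\<in>U. d u v \<le> \<alpha> * (d v w + d w u)"
    and k3: "card B \<ge> 3"
  shows "Dd d B B \<le> 2*\<alpha>*(\<Sum>b\<in>B. \<Sum>a\<in>A-{\<pi> b}. d b a)"
proof -
  define k where "k = card B"
  have cA: "card A = k" using bij_betw_same_card[OF bij] k_def by simp
  have fA: "finite A" using bij fB bij_betw_finite by blast
  have inj: "inj_on \<pi> B" and img: "\<pi> ` B = A" using bij unfolding bij_betw_def by auto
  have piA: "\<pi> b \<in> A" if "b \<in> B" for b using img that by auto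
  define E where "E b = (\<Sum>a\<in>A-{\<pi> b}. d b a)" for b
  define F where "F b b' = E b - d b (\<pi> b')" for b b'
  have pw: "(real k - 2) * d b b' \<le> \<alpha> * (F b b' + F b' b)" if bb: "b \<in> B" "b' \<in> B" "b \<noteq> b'" for b b'
  proof -
    have ne: "\<pi> b \<noteq> \<pi> b'" using inj bb unfolding inj_on_def by blast
    define A2 where "A2 = A - {\<pi> b} - {\<pi> b'}"
    have A2': "A2 = A - {\<pi> b'} - {\<pi> b}" unfolding A2_def by auto
    have cA2: "real (card A2) = real k - 2"
    proof -
      have "card A2 = card (A - {\<pi> b}) - 1" unfolding A2_def using piA[OF bb(2)] ne fA by (simp add: card_Diff_singleton)
      also have "\<dots> = k - 2" using piA[OF bb(1)] fA cA by (simp add: card_Diff_singleton)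
      finally show ?thesis using k3 k_def by simp
    qed
    have "(real k - 2) * d b b' = (\<Sum>a\<in>A2. d b b')" using cA2 by simp
    also have "\<dots> \<le> (\<Sum>a\<in>A2. \<alpha> * (d b a + d b' a))"
    proof (rule sum_mono)
      fix a assume "a \<in> A2"
      hence aU: "a \<in> U" using AU unfolding A2_def by auto
      have bU: "b \<in> U" "b' \<in> U" using bb BU by auto
      have "d b b' \<le> \<alpha> * (d b' a + d a b)" using tri aU bU by blast
      moreover have "d a b = d b a" using sym aU bU by blast
      ultimately show "d b b' \<le> \<alpha> * (d b a + d b' a)" by (simp add: add.commute)
    qed
    also have "\<dots> = \<alpha> * ((\<Sum>a\<in>A2. d b a) + (\<Sum>a\<in>A2. d b' a))"
      by (simp add: sum.distrib sum_distrib_left[symmetric])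
    also have "(\<Sum>a\<in>A2. d b a) = F b b'"
      unfolding A2_def F_def E_def using fA piA[OF bb(2)] ne by (simp add: sum_diff1)
    also have "(\<Sum>a\<in>A2. d b' a) = F b' b"
      unfolding A2' F_def E_def using fA piA[OF bb(1)] ne by (simp add: sum_diff1)
    finally show ?thesis .
  qed
  have rowF: "(\<Sum>b'\<in>B. if b = b' then 0 else F b b') = (real k - 2) * E b" if bB: "b \<in> B" for b
  proof -
    have "(\<Sum>b'\<in>B. if b = b' then 0 else F b b') = (\<Sum>b'\<in>B-{b}. F b b')"
      using fB bB by (simp add: sum.remove[of B b]) (intro sum.cong refl, auto)
    also have "\<dots> = real (card (B - {b})) * E b - (\<Sum>b'\<in>B-{b}. d b (\<pi> b'))"
      unfolding F_def by (simp add: sum_subtractf)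
    also have "(\<Sum>b'\<in>B-{b}. d b (\<pi> b')) = (\<Sum>a\<in>\<pi> ` (B-{b}). d b a)"
      using inj by (subst sum.reindex) (auto intro: inj_on_subset)
    also have "\<pi> ` (B - {b}) = A - {\<pi> b}" using inj img bB by (auto simp: inj_on_def)
    also have "real (card (B - {b})) = real k - 1" using fB bB k_def k3 by (simp add: card_Diff_singleton)
    finally show ?thesis unfolding E_def by (simp add: algebra_simps)
  qed
  have swapF: "(\<Sum>b\<in>B. \<Sum>b'\<in>B. if b = b' then 0 else F b' b) = (\<Sum>b\<in>B. \<Sum>b'\<in>B. if b = b' then 0 else F b b')"
    by (subst sum.swap) (intro sum.cong refl; auto)
  have "(real k - 2) * Dd d B B = (\<Sum>b\<in>B. \<Sum>b'\<in>B. if b = b' then 0 else (real k - 2) * d b b')"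
    unfolding Dd_def sum_distrib_left using z BU by (intro sum.cong refl) (auto simp del: sum_distrib_left)
  also have "\<dots> \<le> (\<Sum>b\<in>B. \<Sum>b'\<in>B. if b = b' then 0 else \<alpha> * (F b b' + F b' b))"
    using pw by (intro sum_mono) auto
  also have "\<dots> = \<alpha> * ((\<Sum>b\<in>B. \<Sum>b'\<in>B. if b = b' then 0 else F b b') + (\<Sum>b\<in>B. \<Sum>b'\<in>B. if b = b' then 0 else F b' b))"
  proof -
    have "\<And>b b'. (if b = b' then 0 else \<alpha> * (F b b' + F b' b)) = \<alpha> * (if b = b' then 0 else F b b') + \<alpha> * (if b = b' then 0 else F b' b)"
      by (simp add: distrib_left)
    thus ?thesis by (simp only: sum.distrib sum_distrib_left distrib_left)
  qed
  also have "\<dots> = 2 * \<alpha> * (\<Sum>b\<in>B. \<Sum>b'\<in>B. if b = b' then 0 else F b b')" unfolding swapF by simp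
  also have "(\<Sum>b\<in>B. \<Sum>b'\<in>B. if b = b' then 0 else F b b') = (real k - 2) * (\<Sum>b\<in>B. E b)"
    using rowF by (simp add: sum_distrib_left)
  finally have main: "(real k - 2) * Dd d B B \<le> (real k - 2) * (2 * \<alpha> * (\<Sum>b\<in>B. E b))" by (simp add: algebra_simps)
  have "real k - 2 > 0" using k3 k_def by simp
  with main have "Dd d B B \<le> 2 * \<alpha> * (\<Sum>b\<in>B. E b)" by simp
  thus ?thesis unfolding E_def .
qed


lemma le_mul_ge1: "0 \<le> (x::real) \<Longrightarrow> 1 \<le> a \<Longrightarrow> x \<le> a*x"
  using mult_right_mono[of 1 a x] by simp
lemma le_mul_sq: "0 \<le> (x::real) \<Longrightarrow> 1 \<le> a \<Longrightarrow> a*x \<le> a^2*x"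
  using mult_left_mono[OF le_mul_ge1[of x a], of a] by (simp add: power2_eq_square)
lemma le_sq: "0 \<le> (x::real) \<Longrightarrow> 1 \<le> a \<Longrightarrow> x \<le> a^2*x"
  using le_mul_ge1 le_mul_sq order_trans by blast

lemma arith_main:
  fixes al L fO fS BB Sg BC CC AA AC :: real
  assumes "al \<ge> 1" "L \<ge> 0" "fO \<ge> 0" "fS \<ge> 0" "BC \<ge> 0" "CC \<ge> 0" "AA \<ge> 0" "AC \<ge> 0" "Sg \<ge> 0"
    "BB \<le> 2*al*Sg" "fO - 2*fS + L*(Sg + BC - AA - AC) \<le> 0"
  shows "fO + L*((BB + 2*BC + CC)/2) \<le> 2*al^2*(fS + L*((AA + 2*AC + CC)/2))"
proof -
  have e1: "fO + L*((BB + 2*BC + CC)/2) = fO + L*BC + (L*BB)/2 + (L*CC)/2" by (simp add: algebra_simps)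
  have e2: "2*al^2*(fS + L*((AA + 2*AC + CC)/2)) = 2*(al^2*fS) + al^2*(L*AA) + 2*(al^2*(L*AC)) + al^2*(L*CC)"
    by (simp add: algebra_simps)
  have 1: "L*BB \<le> 2*(al*(L*Sg))" using mult_left_mono[OF assms(10) assms(2)] by (simp add: algebra_simps)
  have 2: "al*fO + al*(L*Sg) + al*(L*BC) \<le> 2*(al*fS) + al*(L*AA) + al*(L*AC)"
  proof -
    have "fO + L*Sg + L*BC \<le> 2*fS + L*AA + L*AC" using assms(11) by (simp add: algebra_simps)
    from mult_left_mono[OF this, of al] assms(1) show ?thesis by (simp add: algebra_simps)
  qed
  have 3: "fO \<le> al*fO" "L*BC \<le> al*(L*BC)" using assms by (auto intro!: le_mul_ge1)
  have 4: "al*fS \<le> al^2*fS" "al*(L*AA) \<le> al^2*(L*AA)" "al*(L*AC) \<le> al^2*(L*AC)" "L*CC \<le> al^2*(L*CC)"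
    using assms by (auto intro!: le_mul_sq le_sq)
  have 5: "al^2*(L*AC) \<ge> 0" "L*CC \<ge> 0" using assms by auto
  show ?thesis unfolding e1 e2 using 1 2 3 4 5 by linarith
qed

lemma k2_core:
  fixes a Y Z :: real
  assumes "a \<ge> 1" "Y \<ge> 0" "Z \<ge> 0" "Y \<le> a*Z"
  shows "3*(a*Y) + a*Z \<le> 2*(a^2*Y) + 2*(a^2*Z)"
proof (cases "a \<ge> 3/2")
  case True
  have "3*Y \<le> 2*a*Y" using True assms by (intro mult_right_mono) auto
  hence "3*(a*Y) \<le> 2*(a^2*Y)" using assms mult_left_mono[of "3*Y" "2*a*Y" a]
    by (simp add: power2_eq_square algebra_simps)
  moreover have "a*Z \<le> 2*(a^2*Z)" using le_mul_sq[of Z a] assms by (smt (verit) mult_nonneg_nonneg)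
  ultimately show ?thesis by linarith
next
  case False
  have c: "3*a - 2*a^2 \<ge> 0" using False assms by (simp add: power2_eq_square)
  have "(3*a - 2*a^2)*Y \<le> (3*a - 2*a^2)*(a*Z)" using mult_left_mono[OF assms(4) c] .
  moreover have "(3*a^2 - 2*a^3 + a)*Z \<le> 2*a^2*Z"
  proof -
    have "3*a^2 - 2*a^3 + a \<le> 2*a^2"
    proof -
      have "a*((2*a+1)*(a-1)) \<ge> 0" using assms by simp
      thus ?thesis by (simp add: algebra_simps power2_eq_square power3_eq_cube)
    qed
    thus ?thesis using assms(3) by (intro mult_right_mono)
  qed
  ultimately show ?thesis by (simp add: algebra_simps power2_eq_square power3_eq_cube)
qed
lemma arith_k2:
  fixes al L fO fS x s y BC AC CC :: real
  assumes "al \<ge> 1" "L \<ge> 0" "fO \<ge> 0" "fS \<ge> 0" "x \<ge> 0" "s \<ge> 0" "y \<ge> 0" "BC \<ge> 0" "AC \<ge> 0" "CC \<ge> 0"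
    "x \<le> al^2*(s+y)" "x \<le> al*BC" "y \<le> al*AC"
    "fO - 2*fS + L*(s + BC - 2*y - AC) \<le> 0"
  shows "fO + L*((2*x + 2*BC + CC)/2) \<le> 2*al^2*(fS + L*((2*y + 2*AC + CC)/2))"
proof -
  have am: "al - 1 \<ge> 0" using assms by simp
  have "(al-1)*x \<le> (al-1)*(al*BC)" using mult_left_mono[OF assms(12) am] .
  hence "al*x \<le> al*(al*(s+y) + (al-1)*BC)" using assms(11)
    by (simp add: algebra_simps power2_eq_square)
  hence x2: "x \<le> al*(s+y) + (al-1)*BC" using assms(1) by simp
  have 1: "L*x \<le> al*(L*s) + al*(L*y) + al*(L*BC) - L*BC"
    using mult_left_mono[OF x2 assms(2)] by (simp add: algebra_simps)
  have 2: "al*fO + al*(L*s) + al*(L*BC) \<le> 2*(al*fS) + 2*(al*(L*y)) + al*(L*AC)"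
  proof -
    have "fO + L*s + L*BC \<le> 2*fS + 2*(L*y) + L*AC" using assms(14) by (simp add: algebra_simps)
    from mult_left_mono[OF this, of al] assms(1) show ?thesis by (simp add: algebra_simps)
  qed
  have 3: "fO \<le> al*fO" using assms by (auto intro!: le_mul_ge1)
  have 4: "al*fS \<le> al^2*fS" "L*CC \<le> al^2*(L*CC)" "L*CC \<ge> 0"
    using assms by (auto intro!: le_mul_sq le_sq)
  have 5: "3*(al*(L*y)) + al*(L*AC) \<le> 2*(al^2*(L*y)) + 2*(al^2*(L*AC))"
    using k2_core[of al "L*y" "L*AC"] assms mult_left_mono[OF assms(13) assms(2)]
    by (simp add: algebra_simps)
  have e1: "fO + L*((2*x + 2*BC + CC)/2) = fO + L*x + L*BC + (L*CC)/2" by (simp add: algebra_simps)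
  have e2: "2*al^2*(fS + L*((2*y + 2*AC + CC)/2)) = 2*(al^2*fS) + 2*(al^2*(L*y)) + 2*(al^2*(L*AC)) + al^2*(L*CC)"
    by (simp add: algebra_simps)
  show ?thesis unfolding e1 e2 using 1 2 3 4 5 by linarith
qed


theorem theorem2:
  fixes U :: "'a set" and F :: "'a set set" and f :: "'a set \<Rightarrow> real"
    and d :: "'a \<Rightarrow> 'a \<Rightarrow> real" and \<alpha> lam :: real
    and x y :: 'a and S0 S Opt :: "'a set"
  assumes "matroid U F"
    and "matroid_rank_ge2 F"
    and "lam \<ge> 0"
    and "relaxed_semimetric \<alpha> U d"
    and "\<forall>T \<subseteq> U. f T \<ge> 0"
    and "monotone_set_fun U f"
    and "submodular U f"
    and "x \<noteq> y" and "{x, y} \<in> F"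
    and "\<forall>a b. a \<noteq> b \<and> {a, b} \<in> F \<longrightarrow>
           f {a, b} + lam * d a b \<le> f {x, y} + lam * d x y"
    and "basis U F S0" and "x \<in> S0" and "y \<in> S0"
    and "(improving_swap U F (phi f lam d))\<^sup>*\<^sup>* S0 S"
    and "\<not> (\<exists>S'. improving_swap U F (phi f lam d) S S')"
    and "Opt \<in> F" and "\<forall>T \<in> F. phi f lam d T \<le> phi f lam d Opt"
  shows "phi f lam d S \<ge> phi f lam d Opt / (2 * \<alpha>^2)"
proof -
  have M: "matroid U F" by fact
  have lam: "lam \<ge> 0" by fact
  have al: "\<alpha> \<ge> 1" and dnn: "\<forall>u\<in>U. \<forall>v\<in>U. d u v \<ge> 0" and sym: "\<forall>u\<in>U. \<forall>v\<in>U. d u v = d v u"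
    and z: "\<forall>u\<in>U. d u u = 0" and tri: "\<forall>u\<in>U. \<forall>v\<in>U. \<forall>w\<in>U. d u v \<le> \<alpha> * (d v w + d w u)"
    using assms(4) unfolding relaxed_semimetric_def by auto
  have fnn: "\<And>T. T \<subseteq> U \<Longrightarrow> f T \<ge> 0" using assms(5) by blast
  have mono: "\<And>T T'. T \<subseteq> T' \<Longrightarrow> T' \<subseteq> U \<Longrightarrow> f T \<le> f T'" using assms(6) unfolding monotone_set_fun_def by blast
  have sm: "submodular U f" by fact
  have S0F: "S0 \<in> F" using assms(11) unfolding basis_def by blast
  have inv: "S \<in> F \<and> card S = card S0 \<and> phi f lam d S0 \<le> phi f lam d S" using swap_inv[OF M assms(14) S0F] .
  hence SF: "S \<in> F" by blast
  have rk: "\<forall>I\<in>F. card I \<le> card S" using rank_bound[OF M assms(11)] inv by auto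
  have SU: "S \<subseteq> U" and fS: "finite S" using mat_fin[OF M SF] by auto
  have phiD: "phi f lam d T = f T + lam * (Dd d T T / 2)" if "T \<subseteq> U" for T
    unfolding phi_def using dsum_eq[of T U d] that z by simp
  have Dmono: "Dd d T T \<le> Dd d T' T'" if "T \<subseteq> T'" "T' \<subseteq> U" for T T'
  proof -
    have "finite U" using M unfolding matroid_def by blast
    hence "finite T'" using that(2) finite_subset by blast
    thus ?thesis using Dd_mono[OF that _ dnn] by blast
  qed
  have phimono: "phi f lam d T \<le> phi f lam d T'" if "T \<subseteq> T'" "T' \<subseteq> U" for T T'
  proof -
    have "lam * (Dd d T T / 2) \<le> lam * (Dd d T' T' / 2)" using Dmono[OF that] lam by (intro mult_left_mono) auto
    thus ?thesis using phiD that mono[OF that] by (metis add_mono order_trans)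
  qed
  have phinn: "phi f lam d T \<ge> 0" if "T \<subseteq> U" for T
  proof -
    have "Dd d T T \<ge> 0" using Dd_nonneg[OF that that dnn] .
    thus ?thesis using phiD[OF that] fnn[OF that] lam by simp
  qed
  obtain Q where Q: "Q \<in> F" "Opt \<subseteq> Q" "card Q = card S"
    using mat_ext[OF M assms(16) SF] rk assms(16) by blast
  have QU: "Q \<subseteq> U" and fQ: "finite Q" using mat_fin[OF M Q(1)] by auto
  have optQ: "phi f lam d Opt \<le> phi f lam d Q" using phimono[OF Q(2) QU] .
  obtain \<pi> where pib: "bij_betw \<pi> (Q - S) (S - Q)" and pif: "\<forall>b\<in>Q-S. insert b (S - {\<pi> b}) \<in> F"
    using exchange_bij[OF M SF Q(1) Q(3) rk] by blast
  define A where "A = S - Q"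
  define B where "B = Q - S"
  define C where "C = S \<inter> Q"
  have AU: "A \<subseteq> U" and BU: "B \<subseteq> U" and CU: "C \<subseteq> U" using SU QU unfolding A_def B_def C_def by auto
  have fA: "finite A" and fB: "finite B" and fC: "finite C" using fS fQ unfolding A_def B_def C_def by auto
  have SAC: "S = A \<union> C" and QBC: "Q = B \<union> C" unfolding A_def B_def C_def by auto
  have dAC: "A \<inter> C = {}" and dBC: "B \<inter> C = {}" unfolding A_def B_def C_def by auto
  have pibij: "bij_betw \<pi> B A" using pib unfolding A_def B_def .
  have piA: "\<pi> b \<in> A" if "b \<in> B" for b using pibij that bij_betwE by blast
  have Bdisj: "b \<in> U - S" if "b \<in> B" for b using that BU unfolding B_def by auto
  have piS: "\<pi> b \<in> S" if "b \<in> B" for b using piA[OF that] unfolding A_def by auto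
  define t where "t b = (f (insert b S) - f S) - (f S - f (S - {\<pi> b}))
      + lam * ((\<Sum>s\<in>S. d b s) - d b (\<pi> b) - (\<Sum>s\<in>S. d (\<pi> b) s))" for b
  have tle: "t b \<le> 0" if bB: "b \<in> B" for b
  proof -
    define S' where "S' = insert b (S - {\<pi> b})"
    have S'F: "S' \<in> F" using pif bB unfolding S'_def B_def by auto
    have "\<not> improving_swap U F (phi f lam d) S S'" using assms(15) by blast
    hence le: "phi f lam d S' \<le> phi f lam d S"
      using Bdisj[OF bB] piS[OF bB] S'F unfolding improving_swap_def S'_def by force
    have S'U: "S' \<subseteq> U" using mat_fin[OF M S'F] by blast
    have bU: "b \<in> U" "b \<notin> S" using Bdisj[OF bB] by auto
    have Dsw: "Dd d S' S' = Dd d S S + 2*(\<Sum>s\<in>S. d b s) - 2*d b (\<pi> b) - 2*(\<Sum>s\<in>S. d (\<pi> b) s)"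
      unfolding S'_def using Dd_swap[OF fS SU piS[OF bB] bU sym z] .
    have sub: "f (insert b (S - {\<pi> b})) - f (S - {\<pi> b}) \<ge> f (insert b S) - f S"
    proof -
      have "S - {\<pi> b} \<subseteq> S" "S \<subseteq> U" "b \<in> U" "b \<notin> S" using SU bU by auto
      thus ?thesis using sm unfolding submodular_def by blast
    qed
    have e: "lam * (Dd d S' S' / 2) = lam * (Dd d S S / 2) + lam * ((\<Sum>s\<in>S. d b s) - d b (\<pi> b) - (\<Sum>s\<in>S. d (\<pi> b) s))"
      unfolding Dsw by (simp add: field_simps)
    show ?thesis using le phiD[OF S'U] phiD[OF SU] e sub unfolding t_def S'_def by linarith
  qed
  have tsum: "(\<Sum>b\<in>B. t b) \<le> 0" using tle by (intro sum_nonpos) auto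
  define G where "G = (\<Sum>b\<in>B. f (insert b S) - f S)"
  define Lo where "Lo = (\<Sum>b\<in>B. f S - f (S - {\<pi> b}))"
  define Tm where "Tm = (\<Sum>b\<in>B. d b (\<pi> b))"
  have tsplit: "(\<Sum>b\<in>B. t b) = G - Lo + lam * (Dd d B S - Tm - Dd d A S)"
  proof -
    have 1: "(\<Sum>b\<in>B. (\<Sum>s\<in>S. d (\<pi> b) s)) = Dd d A S"
      unfolding Dd_def using sum.reindex_bij_betw[OF pibij, of "\<lambda>a. \<Sum>s\<in>S. d a s"] .
    have "(\<Sum>b\<in>B. t b) = G - Lo + lam * ((\<Sum>b\<in>B. \<Sum>s\<in>S. d b s) - Tm - (\<Sum>b\<in>B. (\<Sum>s\<in>S. d (\<pi> b) s)))"
      unfolding t_def G_def Lo_def Tm_def by (simp add: sum.distrib sum_subtractf sum_distrib_left[symmetric])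
    thus ?thesis unfolding 1 Dd_def by simp
  qed
  have Lo_le: "Lo \<le> f S"
  proof -
    have "Lo = (\<Sum>a\<in>A. f S - f (S - {a}))"
      unfolding Lo_def using sum.reindex_bij_betw[OF pibij, of "\<lambda>a. f S - f (S - {a})"] .
    also have "\<dots> \<le> f S - f (S - A)" using sub_loss[OF sm SU fA] unfolding A_def by auto
    also have "\<dots> \<le> f S" using fnn[of "S - A"] SU by auto
    finally show ?thesis .
  qed
  have G_ge: "G \<ge> f Q - f S"
  proof -
    have "f (S \<union> B) - f S \<le> G" unfolding G_def using sub_gain[OF sm SU fB BU] unfolding B_def by auto
    moreover have "f Q \<le> f (S \<union> B)" using mono[of Q "S \<union> B"] SU BU unfolding B_def by auto
    ultimately show ?thesis by simp
  qed
  have DBS: "Dd d B S = Dd d B A + Dd d B C" unfolding SAC using Dd_un_r[OF fA fC dAC] .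
  have DAS: "Dd d A S = Dd d A A + Dd d A C" unfolding SAC using Dd_un_r[OF fA fC dAC] .
  have DSS: "Dd d S S = Dd d A A + 2 * Dd d A C + Dd d C C"
  proof -
    have "Dd d S S = Dd d A S + Dd d C S" unfolding SAC using Dd_un_l[OF fA fC dAC] .
    moreover have "Dd d C S = Dd d C A + Dd d C C" unfolding SAC using Dd_un_r[OF fA fC dAC] .
    moreover have "Dd d C A = Dd d A C" using Dd_sym[OF CU AU sym] .
    ultimately show ?thesis using DAS by simp
  qed
  have DQQ: "Dd d Q Q = Dd d B B + 2 * Dd d B C + Dd d C C"
  proof -
    have "Dd d Q Q = Dd d B Q + Dd d C Q" unfolding QBC using Dd_un_l[OF fB fC dBC] .
    moreover have "Dd d C Q = Dd d C B + Dd d C C" unfolding QBC using Dd_un_r[OF fB fC dBC] .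
    moreover have "Dd d B Q = Dd d B B + Dd d B C" unfolding QBC using Dd_un_r[OF fB fC dBC] .
    moreover have "Dd d C B = Dd d B C" using Dd_sym[OF CU BU sym] .
    ultimately show ?thesis by simp
  qed
  define Sg where "Sg = Dd d B A - Tm"
  have Sg_eq: "Sg = (\<Sum>b\<in>B. \<Sum>a\<in>A-{\<pi> b}. d b a)"
    unfolding Sg_def Tm_def Dd_def using fA piA by (simp add: sum_diff1 sum_subtractf)
  have Sg_nn: "Sg \<ge> 0" unfolding Sg_eq using dnn AU BU by (intro sum_nonneg) blast
  have LOC: "f Q - 2 * f S + lam * (Sg + Dd d B C - Dd d A A - Dd d A C) \<le> 0"
    using tsum tsplit Lo_le G_ge DBS DAS unfolding Sg_def by (simp add: algebra_simps)
  have nn: "Dd d B C \<ge> 0" "Dd d C C \<ge> 0" "Dd d A A \<ge> 0" "Dd d A C \<ge> 0"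
    using Dd_nonneg dnn AU BU CU by blast+
  have fQnn: "f Q \<ge> 0" and fSnn: "f S \<ge> 0" using fnn QU SU by auto
  have phiQ: "phi f lam d Q = f Q + lam * ((Dd d B B + 2 * Dd d B C + Dd d C C) / 2)" using phiD[OF QU] DQQ by simp
  have phiS: "phi f lam d S = f S + lam * ((Dd d A A + 2 * Dd d A C + Dd d C C) / 2)" using phiD[OF SU] DSS by simp
  have key: "phi f lam d Q \<le> 2 * \<alpha>^2 * phi f lam d S"
  proof (cases "card B = 2")
    case False
    have BB: "Dd d B B \<le> 2*\<alpha>*Sg"
    proof (cases "card B \<ge> 3")
      case True thus ?thesis using kb3[OF pibij fB BU AU sym z tri True] Sg_eq by simp
    next
      case False
      with \<open>card B \<noteq> 2\<close> have "card B \<le> Suc 0" by simp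
      hence all: "\<forall>b\<in>B. \<forall>b'\<in>B. b = b'" using fB card_le_Suc0_iff_eq by blast
      have "Dd d B B = 0" unfolding Dd_def
      proof (intro sum.neutral ballI)
        fix b b' assume bb: "b \<in> B" "b' \<in> B"
        hence "b = b'" using all by blast
        moreover have "b \<in> U" using bb BU by blast
        ultimately show "d b b' = 0" using z by simp
      qed
      thus ?thesis using Sg_nn al by simp
    qed
    show ?thesis unfolding phiQ phiS using arith_main[OF al lam fQnn fSnn nn(1) nn(2) nn(3) nn(4) Sg_nn BB LOC] .
  next
    case True
    then obtain b1 b2 where b12: "B = {b1,b2}" "b1 \<noteq> b2" by (auto simp: card_2_iff)
    define a1 where "a1 = \<pi> b1"
    define a2 where "a2 = \<pi> b2"
    have Aeq: "A = {a1,a2}" using bij_betw_imp_surj_on[OF pibij] b12 unfolding a1_def a2_def by auto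
    have a12: "a1 \<noteq> a2" using bij_betw_imp_inj_on[OF pibij] b12 unfolding a1_def a2_def inj_on_def by auto
    have Us: "b1 \<in> U" "b2 \<in> U" "a1 \<in> U" "a2 \<in> U" using BU AU b12 Aeq by auto
    have DBB: "Dd d B B = 2 * d b1 b2" unfolding Dd_def b12 using b12 z sym Us by simp
    have DAA: "Dd d A A = 2 * d a1 a2" unfolding Dd_def Aeq using a12 z sym Us by simp
    have SgE: "Sg = d b1 a2 + d b2 a1"
      unfolding Sg_def Tm_def Dd_def b12 Aeq using b12 a12 unfolding a1_def a2_def by simp
    have nnd: "\<And>u v. u \<in> U \<Longrightarrow> v \<in> U \<Longrightarrow> d u v \<ge> 0" using dnn by blast
    show ?thesis
    proof (cases "C = {}")
      case False
      then obtain c where c: "c \<in> C" by blast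
      have cU: "c \<in> U" using c CU by auto
      have DBCe: "Dd d B C = (\<Sum>c'\<in>C. d b1 c') + (\<Sum>c'\<in>C. d b2 c')" unfolding Dd_def b12 using b12 by simp
      have DACe: "Dd d A C = (\<Sum>c'\<in>C. d a1 c') + (\<Sum>c'\<in>C. d a2 c')" unfolding Dd_def Aeq using a12 by simp
      have single: "d u c \<le> (\<Sum>c'\<in>C. d u c')" if "u \<in> U" for u
        using member_le_sum[of c C "d u"] c fC nnd[OF that] CU by blast
      have x1: "d b1 b2 \<le> \<alpha> * Dd d B C"
      proof -
        have "d b1 b2 \<le> \<alpha> * (d b2 c + d c b1)" using tri Us cU by blast
        moreover have "d c b1 = d b1 c" using sym Us cU by blast
        moreover have "d b2 c + d b1 c \<le> Dd d B C" unfolding DBCe using single[OF Us(1)] single[OF Us(2)] by linarith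
        ultimately show ?thesis using al by (smt (verit) mult_left_mono)
      qed
      have y1: "d a1 a2 \<le> \<alpha> * Dd d A C"
      proof -
        have "d a1 a2 \<le> \<alpha> * (d a2 c + d c a1)" using tri Us cU by blast
        moreover have "d c a1 = d a1 c" using sym Us cU by blast
        moreover have "d a2 c + d a1 c \<le> Dd d A C" unfolding DACe using single[OF Us(3)] single[OF Us(4)] by linarith
        ultimately show ?thesis using al by (smt (verit) mult_left_mono)
      qed
      have x2: "d b1 b2 \<le> \<alpha>^2 * (Sg + d a1 a2)"
      proof -
        have t1: "d b1 b2 \<le> \<alpha> * (d b2 a2 + d a2 b1)" using tri Us by blast
        have t2: "d b2 a2 \<le> \<alpha> * (d a2 a1 + d a1 b2)" using tri Us by blast
        have s1: "d a2 b1 = d b1 a2" "d a1 b2 = d b2 a1" "d a2 a1 = d a1 a2" using sym Us by auto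
        have "\<alpha> * d b2 a2 \<le> \<alpha> * (\<alpha> * (d a1 a2 + d b2 a1))" using t2 s1 al by (intro mult_left_mono) auto
        hence i1: "\<alpha> * d b2 a2 \<le> \<alpha>^2 * d a1 a2 + \<alpha>^2 * d b2 a1" by (simp add: power2_eq_square algebra_simps)
        have i2: "\<alpha> * d b1 a2 \<le> \<alpha>^2 * d b1 a2" using le_mul_sq[OF nnd[OF Us(1) Us(4)] al] .
        have i3: "d b1 b2 \<le> \<alpha> * d b2 a2 + \<alpha> * d b1 a2" using t1 s1 by (simp add: algebra_simps)
        have e: "\<alpha>^2 * (Sg + d a1 a2) = \<alpha>^2 * d b1 a2 + \<alpha>^2 * d b2 a1 + \<alpha>^2 * d a1 a2"
          unfolding SgE by (simp add: algebra_simps)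
        show ?thesis unfolding e using i1 i2 i3 by linarith
      qed
      have LOC2: "f Q - 2 * f S + lam * (Sg + Dd d B C - 2 * d a1 a2 - Dd d A C) \<le> 0" using LOC DAA by simp
      have k: "f Q + lam * ((2 * d b1 b2 + 2 * Dd d B C + Dd d C C) / 2)
          \<le> 2 * \<alpha>^2 * (f S + lam * ((2 * d a1 a2 + 2 * Dd d A C + Dd d C C) / 2))"
        using arith_k2[OF al lam fQnn fSnn nnd[OF Us(1,2)] Sg_nn nnd[OF Us(3,4)] nn(1) nn(4) nn(2) x2 x1 y1 LOC2] .
      show ?thesis unfolding phiQ phiS DBB DAA using k .
    next
      case True
      have QB: "Q = {b1,b2}" using QBC True b12 by simp
      have "f {b1,b2} + lam * d b1 b2 \<le> f {x,y} + lam * d x y" using assms(10) b12 Q(1) QB by blast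
      moreover have "phi f lam d Q = f {b1,b2} + lam * d b1 b2"
        using phiQ DBB QB True unfolding Dd_def by simp
      moreover have xyU: "{x,y} \<subseteq> U" using mat_fin[OF M assms(9)] by blast
      moreover have "phi f lam d {x,y} = f {x,y} + lam * d x y"
        using phiD[OF xyU] sym z xyU assms(8) unfolding Dd_def by simp
      moreover have "phi f lam d {x,y} \<le> phi f lam d S0"
        using phimono[of "{x,y}" S0] assms(12,13) mat_fin[OF M S0F] by blast
      moreover have "phi f lam d S \<le> 2 * \<alpha>^2 * phi f lam d S"
        using le_sq[OF phinn[OF SU] al] phinn[OF SU] by (simp add: algebra_simps)
      ultimately show ?thesis using inv by linarith
    qed
  qed
  have "phi f lam d Opt \<le> phi f lam d S * (2 * \<alpha>^2)" using optQ key by (simp add: algebra_simps)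
  moreover have "2 * \<alpha>^2 > 0" using al by simp
  ultimately show ?thesis by (simp add: divide_le_eq)
qed

end
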